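(* Let $\alpha\in(0,1)$, let $N\ge1$ and $M>1+\frac{N}{\alpha}$ be integers, and let $\{\mathcal U_1,\dots,\mathcal U_M\}$ be a $(\Gamma,\Delta)$ set system over $[N]$. Then $$\frac{\Delta}{\Gamma}\ge(1-\alpha)\,h_2^{-1}\!\left(\frac{\log_2 M}{N}\right).$$
   Context: For integers $N,M\ge1$ and $\Delta<\Gamma<N$, a $(\Gamma,\Delta)$ set system over $[N]=\{1,\dots,N\}$ is a collection $\{\mathcal U_1,\dots,\mathcal U_M\}$ of $M$ distinct subsets of $[N]$, each of size $\Gamma$, with $\Delta=\max_{i\ne j}|\mathcal U_i\cap\mathcal U_j|$. $h_2(p)=-p\log_2p-(1-p)\log_2(1-p)$ is the binary entropy function and $h_2^{-1}:[0,1]\to[0,1/2]$ is the inverse of its restriction to $[0,1/2]$. *)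

theory Defs
  imports Complex_Main
begin

text \<open>Binary entropy function h2(p) = -p log2 p - (1-p) log2 (1-p); with Isabelle's
  convention log 2 0 = 0 this gives h2 0 = h2 1 = 0, matching 0 log 0 = 0.\<close>
definition h2 :: "real \<Rightarrow> real" where
  "h2 p = - p * log 2 p - (1 - p) * log 2 (1 - p)"

definition h2_inv :: "real \<Rightarrow> real" where
  "h2_inv y = (THE p. p \<in> {0..1/2} \<and> h2 p = y)"

definition set_system :: "nat \<Rightarrow> nat \<Rightarrow> nat \<Rightarrow> nat \<Rightarrow> nat set set \<Rightarrow> bool" where
  "set_system N M \<Gamma> \<Delta> F \<longleftrightarrow>
     F \<subseteq> Pow {1..N} \<and> card F = M \<and> (\<forall>U\<in>F. card U = \<Gamma>) \<and>
     \<Delta> < \<Gamma> \<and> \<Gamma> < N \<and>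
     \<Delta> = Max {card (U \<inter> V) | U V. U \<in> F \<and> V \<in> F \<and> U \<noteq> V}"

end

theory Submission
  imports Defs "HOL-Real_Asymp.Real_Asymp"
begin


lemma h2_sym: "h2 (1 - p) = h2 p" unfolding h2_def by (simp add: algebra_simps)

lemma h2_lim: "(h2 \<longlongrightarrow> 0) (at_right 0)"
proof -
  have "((\<lambda>p::real. - p * (ln p / ln 2) - (1-p) * (ln (1-p)/ln 2)) \<longlongrightarrow> 0) (at_right 0)"
    by real_asymp
  then show ?thesis unfolding h2_def log_def by simp
qed

lemma h2_pos: assumes "0 < p" "p < 1" shows "h2 p > 0"
proof -
  have "log 2 p < 0" "log 2 (1-p) < 0" using assms by auto
  moreover have "p * log 2 p < 0" "(1-p) * log 2 (1-p) < 0"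
    using assms calculation by (auto simp: mult_pos_neg)
  ultimately show ?thesis unfolding h2_def by linarith
qed

lemma aux_e: assumes "0 < p" "p < (1::real)" "L > 0"
  shows "- (a / L) - p * (1/p/L) + (b/L) - (1-p) * (-1/(1-p)/L) = (b - a) / L"
proof -
  have "p * (1/p/L) = 1/L" "(1-p) * (-1/(1-p)/L) = - 1/L" using assms by auto
  then show ?thesis by (simp add: diff_divide_distrib)
qed

lemma h2_deriv: assumes "0 < p" "p < 1"
  shows "(h2 has_real_derivative (log 2 ((1-p)/p))) (at p)"
proof -
  have d: "((\<lambda>p. - p * (ln p / ln 2) - (1-p) * (ln (1-p)/ln 2)) has_real_derivative
     ((ln (1-p) - ln p)/ln 2)) (at p)"
    using assms apply (auto intro!: derivative_eq_intros)
    apply (simp add: field_simps)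
    done
  have e: "(ln (1-p) - ln p)/ln 2 = log 2 ((1-p)/p)" using assms by (simp add: log_def ln_div)
  have h: "h2 = (\<lambda>p. - p * (ln p / ln 2) - (1-p) * (ln (1-p)/ln 2))"
    by (simp add: fun_eq_iff h2_def log_def)
  show ?thesis using d unfolding e h[symmetric] .
qed

lemma h2_cont: assumes "0 < p" "p < 1" shows "isCont h2 p"
  using h2_deriv[OF assms] DERIV_isCont by blast

lemma h2_mono: assumes "0 \<le> a" "a < b" "b \<le> 1/2" shows "h2 a < h2 b"
proof (cases "a = 0")
  case True then show ?thesis using h2_pos[of b] assms by (simp add: h2_def)
next
  case False
  show ?thesis
  proof (rule DERIV_pos_imp_increasing_open[OF assms(2)])
    fix x assume x: "a < x" "x < b"
    then have "(1-x)/x > 1" using assms by (simp add: field_simps)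
    then show "\<exists>y. DERIV h2 x :> y \<and> y > 0" using x assms False h2_deriv[of x] by auto
  next
    show "continuous_on {a..b} h2" using assms False
      by (intro continuous_at_imp_continuous_on ballI h2_cont) auto
  qed
qed

lemma h2_inv_le:
  assumes "0 < y" "y \<le> h2 g" "0 < g" "g \<le> 1/2"
  shows "h2_inv y \<le> g"
proof -
  have e1: "\<forall>\<^sub>F p in at_right 0. h2 p < y" using order_tendstoD(2)[OF h2_lim assms(1)] .
  have e2: "\<forall>\<^sub>F p in at_right (0::real). p \<in> {0<..<g}"
    using eventually_at_right_real[OF assms(3)] .
  have "\<forall>\<^sub>F p in at_right (0::real). h2 p < y \<and> p \<in> {0<..<g}"
    using eventually_conj[OF e1 e2] .
  then have "\<exists>\<^sub>F p in at_right (0::real). h2 p < y \<and> p \<in> {0<..<g}"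
    using eventually_frequently[OF trivial_limit_at_right_real] by blast
  then have "\<exists>p. h2 p < y \<and> p \<in> {0<..<g}" by (rule frequently_ex)
  then have "\<exists>p. h2 p < y \<and> 0 < p \<and> p < g" by auto
  then obtain a where a: "h2 a < y" "0 < a" "a < g" by blast
  have "\<exists>x. a \<le> x \<and> x \<le> g \<and> h2 x = y"
    using a assms by (intro IVT) (auto intro!: h2_cont)
  then obtain x where x: "a \<le> x" "x \<le> g" "h2 x = y" by blast
  have ex: "\<exists>!p. p \<in> {0..1/2} \<and> h2 p = y"
  proof
    show "x \<in> {0..1/2} \<and> h2 x = y" using x a assms by auto
  next
    fix p assume p: "p \<in> {0..1/2} \<and> h2 p = y"
    show "p = x"
    proof (rule ccontr)
      assume "p \<noteq> x"
      then consider "p < x" | "x < p" by linarith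
      then show False using h2_mono[of p x] h2_mono[of x p] p x a assms by (cases; auto)
    qed
  qed
  have "h2_inv y \<in> {0..1/2} \<and> h2 (h2_inv y) = y"
    unfolding h2_inv_def by (rule theI'[OF ex])
  then show ?thesis using h2_mono[of g "h2_inv y"] assms by force
qed



lemma cs_sum:
  fixes f :: "'a \<Rightarrow> real"
  assumes "finite S"
  shows "(\<Sum>x\<in>S. f x)^2 \<le> real (card S) * (\<Sum>x\<in>S. (f x)^2)"
proof -
  define A where "A = (\<Sum>x\<in>S. (f x)^2)"
  define B where "B = (\<Sum>x\<in>S. f x)"
  have inner: "(\<Sum>y\<in>S. (f x - f y)^2) = real (card S) * (f x)^2 + A - 2 * f x * B" for x
  proof -
    have "(\<Sum>y\<in>S. (f x - f y)^2) = (\<Sum>y\<in>S. ((f x)^2 + (f y)^2) - 2 * f x * f y)"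
      by (intro sum.cong refl) (simp add: power2_eq_square algebra_simps)
    also have "\<dots> = (\<Sum>y\<in>S. (f x)^2 + (f y)^2) - (\<Sum>y\<in>S. 2 * f x * f y)"
      by (rule sum_subtractf)
    also have "(\<Sum>y\<in>S. (f x)^2 + (f y)^2) = real (card S) * (f x)^2 + A"
      unfolding A_def by (simp add: sum.distrib)
    also have "(\<Sum>y\<in>S. 2 * f x * f y) = 2 * f x * B"
      unfolding B_def by (simp add: sum_distrib_left)
    finally show ?thesis .
  qed
  have "0 \<le> (\<Sum>x\<in>S. \<Sum>y\<in>S. (f x - f y)^2)" by (intro sum_nonneg) auto
  also have "\<dots> = (\<Sum>x\<in>S. (real (card S) * (f x)^2 + A) - 2 * B * f x)"
    unfolding inner by (intro sum.cong refl) (simp add: algebra_simps)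
  also have "\<dots> = (\<Sum>x\<in>S. real (card S) * (f x)^2 + A) - (\<Sum>x\<in>S. 2 * B * f x)"
    by (rule sum_subtractf)
  also have "\<dots> = real (card S) * A + real (card S) * A - 2 * B * B"
    unfolding A_def B_def by (simp add: sum.distrib sum_distrib_left)
  finally show ?thesis unfolding A_def[symmetric] B_def[symmetric] by (simp add: power2_eq_square mult.commute)
qed

lemma binom_entropy:
  assumes "0 < k" "k < n"
  shows "log 2 (real (n choose k)) \<le> real n * h2 (real k / real n)"
proof -
  define p where "p = real k / real n"
  have p: "0 < p" "p < 1" using assms by (auto simp: p_def)
  have "(1::real) = (p + (1 - p))^n" by simp
  also have "\<dots> = (\<Sum>i\<le>n. real (n choose i) * p^i * (1-p)^(n-i))"
    by (rule binomial_ring)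
  also have "\<dots> \<ge> real (n choose k) * p^k * (1-p)^(n-k)"
    using assms p by (intro member_le_sum) auto
  finally have le1: "real (n choose k) * (p^k * (1-p)^(n-k)) \<le> 1" by (simp add: mult.assoc)
  have pos: "0 < p^k * (1-p)^(n-k)" using p by simp
  have Cpos: "0 < real (n choose k)" using assms by simp
  have "log 2 (real (n choose k) * (p^k * (1-p)^(n-k))) \<le> 0"
    using le1 Cpos pos by (subst log_le_zero_cancel_iff) auto
  then have "log 2 (real (n choose k)) + (real k * log 2 p + real (n-k) * log 2 (1-p)) \<le> 0"
    using Cpos pos p by (simp add: log_mult log_nat_power)
  moreover have "real k = real n * p" "real (n-k) = real n * (1-p)"
    using assms by (auto simp: p_def of_nat_diff field_simps)
  ultimately show ?thesis unfolding p_def[symmetric] h2_def by (simp add: algebra_simps)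
qed



lemma sum_ind_card:
  assumes "finite S" "A \<subseteq> S"
  shows "(\<Sum>x\<in>S. if x \<in> A then 1 else 0 :: real) = real (card A)"
proof -
  have "(\<Sum>x\<in>S. if x \<in> A then 1 else 0 :: real) = (\<Sum>x\<in>S \<inter> A. 1)"
    using assms by (simp add: sum.If_cases)
  also have "S \<inter> A = A" using assms by auto
  finally show ?thesis by simp
qed

lemma counting:
  fixes F :: "'a set set" and S :: "'a set"
  assumes S: "finite S" and FS: "F \<subseteq> Pow S" and "finite F"
    and G: "\<forall>U\<in>F. card U = G"
    and D: "\<forall>U\<in>F. \<forall>V\<in>F. U \<noteq> V \<longrightarrow> card (U \<inter> V) \<le> D"
  shows "(real (card F) * real G)^2 \<le> real (card S) * (real (card F) * real G + real (card F) * (real (card F) - 1) * real D)"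
proof -
  define d where "d x = (\<Sum>U\<in>F. if x \<in> U then 1 else 0 :: real)" for x
  have s1: "(\<Sum>x\<in>S. d x) = real (card F) * real G"
  proof -
    have "(\<Sum>x\<in>S. d x) = (\<Sum>U\<in>F. \<Sum>x\<in>S. if x \<in> U then 1 else 0 :: real)"
      unfolding d_def by (rule sum.swap)
    also have "\<dots> = (\<Sum>U\<in>F. real G)"
      using FS G S by (intro sum.cong refl) (auto simp: sum_ind_card)
    finally show ?thesis by simp
  qed
  have s2: "(\<Sum>x\<in>S. (d x)^2) = (\<Sum>U\<in>F. \<Sum>V\<in>F. real (card (U \<inter> V)))"
  proof -
    have "(\<Sum>x\<in>S. (d x)^2) = (\<Sum>x\<in>S. \<Sum>U\<in>F. \<Sum>V\<in>F. (if x \<in> U \<inter> V then 1 else 0 :: real))"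
      unfolding d_def power2_eq_square sum_product by (intro sum.cong refl) auto
    also have "\<dots> = (\<Sum>U\<in>F. \<Sum>x\<in>S. \<Sum>V\<in>F. (if x \<in> U \<inter> V then 1 else 0 :: real))"
      by (rule sum.swap)
    also have "\<dots> = (\<Sum>U\<in>F. \<Sum>V\<in>F. \<Sum>x\<in>S. (if x \<in> U \<inter> V then 1 else 0 :: real))"
      by (intro sum.cong refl sum.swap)
    also have "\<dots> = (\<Sum>U\<in>F. \<Sum>V\<in>F. real (card (U \<inter> V)))"
      using FS S by (intro sum.cong refl sum_ind_card) auto
    finally show ?thesis .
  qed
  have s3: "(\<Sum>U\<in>F. \<Sum>V\<in>F. real (card (U \<inter> V))) \<le> (\<Sum>U\<in>F. real G + (real (card F) - 1) * real D)"
  proof (rule sum_mono)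
    fix U assume U: "U \<in> F"
    have "(\<Sum>V\<in>F. real (card (U \<inter> V))) = real (card (U \<inter> U)) + (\<Sum>V\<in>F - {U}. real (card (U \<inter> V)))"
      using U assms(3) by (simp add: sum.remove)
    also have "(\<Sum>V\<in>F - {U}. real (card (U \<inter> V))) \<le> (\<Sum>V\<in>F - {U}. real D)"
      using D U by (intro sum_mono) auto
    also have "(\<Sum>V\<in>F - {U}. real D) = (real (card F) - 1) * real D"
    proof -
      have "card F \<ge> 1" using U assms(3) by (metis One_nat_def Suc_leI card_gt_0_iff empty_iff)
      then show ?thesis using U assms(3) by (simp add: of_nat_diff)
    qed
    finally show "(\<Sum>V\<in>F. real (card (U \<inter> V))) \<le> real G + (real (card F) - 1) * real D"
      using G U by simp
  qed
  have "(\<Sum>x\<in>S. d x)^2 \<le> real (card S) * (\<Sum>x\<in>S. (d x)^2)"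
    using cs_sum[OF S] .
  then have "(real (card F) * real G)^2 \<le> real (card S) * (\<Sum>U\<in>F. \<Sum>V\<in>F. real (card (U \<inter> V)))"
    unfolding s1 s2 .
  also have "\<dots> \<le> real (card S) * (\<Sum>U\<in>F. real G + (real (card F) - 1) * real D)"
    using s3 by (intro mult_left_mono) auto
  also have "(\<Sum>U\<in>F. real G + (real (card F) - 1) * real D)
      = real (card F) * real G + real (card F) * (real (card F) - 1) * real D"
    by (simp add: algebra_simps)
  finally show ?thesis .
qed


theorem proposition2:
  fixes \<alpha> :: real and N M \<Gamma> \<Delta> :: nat and F :: "nat set set"
  assumes "0 < \<alpha>" and "\<alpha> < 1"
    and "N \<ge> 1"
    and "real M > 1 + real N / \<alpha>"
    and "set_system N M \<Gamma> \<Delta> F"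
  shows "real \<Delta> / real \<Gamma> \<ge> (1 - \<alpha>) * h2_inv (log 2 (real M) / real N)"
proof -
  note ss = assms(5)[unfolded set_system_def]
  have FS: "F \<subseteq> Pow {1..N}" and cF: "card F = M" and G: "\<forall>U\<in>F. card U = \<Gamma>"
    and DG: "\<Delta> < \<Gamma>" and GN: "\<Gamma> < N"
    and Dmax: "\<Delta> = Max {card (U \<inter> V) | U V. U \<in> F \<and> V \<in> F \<and> U \<noteq> V}"
    using ss by auto
  have finF: "finite F" using FS finite_subset by blast
  have NalM: "real N / \<alpha> < real M - 1" using assms(4) by linarith
  have "real N / \<alpha> > 0" using assms(1,3) by simp
  then have M2: "M \<ge> 2" using NalM by linarith
  have aM: "\<alpha> * (real M - 1) > real N"
    using NalM assms(1) by (simp add: pos_divide_less_eq mult.commute)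
  have Gpos: "\<Gamma> \<ge> 1" using DG by linarith
  have D: "\<forall>U\<in>F. \<forall>V\<in>F. U \<noteq> V \<longrightarrow> card (U \<inter> V) \<le> \<Delta>"
  proof (intro ballI impI)
    fix U V assume UV: "U \<in> F" "V \<in> F" "U \<noteq> V"
    have fin: "finite {card (U \<inter> V) | U V. U \<in> F \<and> V \<in> F \<and> U \<noteq> V}"
    proof (rule finite_subset)
      show "{card (U \<inter> V) | U V. U \<in> F \<and> V \<in> F \<and> U \<noteq> V} \<subseteq> (\<lambda>(U,V). card (U \<inter> V)) ` (F \<times> F)"
        by auto
      show "finite ((\<lambda>(U,V). card (U \<inter> V)) ` (F \<times> F))" using finF by simp
    qed
    show "card (U \<inter> V) \<le> \<Delta>" unfolding Dmax using UV by (intro Max_ge[OF fin]) blast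
  qed
  have cnt: "(real M * real \<Gamma>)^2 \<le> real N * (real M * real \<Gamma> + real M * (real M - 1) * real \<Delta>)"
    using counting[of "{1..N}" F \<Gamma> \<Delta>] FS finF G D cF by simp
  have key: "(1 - \<alpha>) * (real \<Gamma> / real N) \<le> real \<Delta> / real \<Gamma>"
  proof -
    have Mp: "real M > 0" using M2 by simp
    have c2: "real M * real \<Gamma>^2 \<le> real N * real \<Gamma> + real N * (real M - 1) * real \<Delta>"
    proof -
      have "real M * (real M * real \<Gamma>^2) \<le> real M * (real N * real \<Gamma> + real N * (real M - 1) * real \<Delta>)"
        using cnt by (simp add: power2_eq_square algebra_simps)
      then show ?thesis using Mp by (simp add: mult_le_cancel_left_pos)
    qed
    have g1: "real \<Gamma> * (1 + \<alpha> * (real M - 1)) \<ge> real N"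
    proof -
      have "1 + \<alpha> * (real M - 1) \<le> real \<Gamma> * (1 + \<alpha> * (real M - 1))"
        using mult_right_mono[of 1 "real \<Gamma>" "1 + \<alpha> * (real M - 1)"] Gpos aM assms(3) by simp
      then show ?thesis using aM by linarith
    qed
    then have "real \<Gamma> * (real \<Gamma> * (1 + \<alpha> * (real M - 1))) \<ge> real \<Gamma> * real N"
      by (intro mult_left_mono) auto
    then have "(1 - \<alpha>) * real \<Gamma>^2 * (real M - 1) \<le> real N * real \<Delta> * (real M - 1)"
      using c2 by (simp add: power2_eq_square algebra_simps)
    then have "(1 - \<alpha>) * real \<Gamma>^2 \<le> real N * real \<Delta>"
      using M2 by (simp add: mult_le_cancel_right)
    moreover have "real N > 0" "real \<Gamma> > 0" using assms(3) Gpos by auto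
    ultimately show ?thesis by (simp add: field_simps power2_eq_square)
  qed
  define g where "g = real \<Gamma> / real N"
  have g: "0 < g" "g < 1" using Gpos GN by (auto simp: g_def)
  have "M \<le> N choose \<Gamma>"
  proof -
    have "F \<subseteq> {B. B \<subseteq> {1..N} \<and> card B = \<Gamma>}" using FS G by auto
    then have "card F \<le> card {B. B \<subseteq> {1..N} \<and> card B = \<Gamma>}"
      by (intro card_mono) (auto intro: finite_subset[of _ "Pow {1..N}"])
    then show ?thesis using cF by (simp add: n_subsets)
  qed
  then have "log 2 (real M) \<le> log 2 (real (N choose \<Gamma>))" using M2 GN by (subst log_le_cancel_iff) auto
  also have "\<dots> \<le> real N * h2 g" unfolding g_def using Gpos GN by (intro binom_entropy) auto
  finally have yle: "log 2 (real M) / real N \<le> h2 g"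
    using assms(3) by (simp add: divide_le_eq mult.commute)
  have ypos: "log 2 (real M) / real N > 0" using M2 assms(3) by simp
  define g' where "g' = min g (1 - g)"
  have "h2 g' = h2 g" unfolding g'_def by (cases "g \<le> 1 - g") (auto simp: min_def h2_sym)
  then have "h2_inv (log 2 (real M) / real N) \<le> g'"
    using g yle ypos by (intro h2_inv_le) (auto simp: g'_def min_def)
  then have "h2_inv (log 2 (real M) / real N) \<le> g" unfolding g'_def by linarith
  then have "(1 - \<alpha>) * h2_inv (log 2 (real M) / real N) \<le> (1 - \<alpha>) * g"
    using assms(2) by (intro mult_left_mono) auto
  then show ?thesis using key unfolding g_def by linarith
qed

end
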